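(* Let $A=[A_{ij}]\in\{0,1\}^{m\times m}$ be an invertible matrix each of whose rows has at most two non-zero entries. Then every entry of $A^{-1}$ lies in $\{0,\pm1,\pm\tfrac12\}$. *)

theory Defs
  imports "HOL-Analysis.Analysis"
begin

end

theory Submission
  imports Defs
begin

lemma row_cases:
  fixes a :: "'m::finite \<Rightarrow> real"
  assumes a01: "\<forall>j. a j \<in> {0,1}" and c2: "card {j. a j \<noteq> 0} \<le> 2"
  shows "(\<forall>v. (\<Sum>j\<in>UNIV. a j * v j) = 0) \<or> (\<exists>p. \<forall>v. (\<Sum>j\<in>UNIV. a j * v j) = v p)
     \<or> (\<exists>p q. p \<noteq> q \<and> (\<forall>v. (\<Sum>j\<in>UNIV. a j * v j) = v p + v q))"
proof -
  define S where "S = {j. a j \<noteq> 0}"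
  have s: "(\<Sum>j\<in>UNIV. a j * v j) = (\<Sum>j\<in>S. v j)" for v
  proof -
    have "(\<Sum>j\<in>UNIV. a j * v j) = (\<Sum>j\<in>S. a j * v j)"
      by (rule sum.mono_neutral_right) (auto simp: S_def)
    also have "\<dots> = (\<Sum>j\<in>S. v j)"
    proof (intro sum.cong refl)
      fix j assume "j \<in> S"
      then have "a j = 1" using a01 by (force simp: S_def)
      then show "a j * v j = v j" by simp
    qed
    finally show ?thesis .
  qed
  have "card S = 0 \<or> card S = 1 \<or> card S = 2" using c2 unfolding S_def by linarith
  moreover
  { assume "card S = 0"
    then have "S = {}" by simp
    then have ?thesis using s by simp }
  moreover
  { assume "card S = 1"
    then obtain p where "S = {p}" by (rule card_1_singletonE)
    then have "\<forall>v. (\<Sum>j\<in>UNIV. a j * v j) = v p" using s by simp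
    then have ?thesis by blast }
  moreover
  { assume "card S = 2"
    then obtain p q where "S = {p,q}" "p \<noteq> q" by (auto simp: card_2_iff)
    then have "\<forall>v. (\<Sum>j\<in>UNIV. a j * v j) = v p + v q" using s by simp
    then have ?thesis using \<open>p \<noteq> q\<close> by blast }
  ultimately show ?thesis by blast
qed

theorem lemma1:
  fixes A :: "real ^ 'm ^ 'm"
  assumes entries01: "\<forall>i j. A $ i $ j \<in> {0, 1}"
    and rows: "\<forall>i. card {j. A $ i $ j \<noteq> 0} \<le> 2"
    and inv: "invertible A"
  shows "\<forall>i j. matrix_inv A $ i $ j \<in> {0, 1, -1, 1/2, -1/2}"
proof (intro allI)
  fix i c
  define B where "B = matrix_inv A"
  have ABB: "A ** B = mat 1 \<and> B ** A = mat 1"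
    using inv unfolding invertible_def matrix_inv_def B_def by (rule someI_ex)
  then have AB: "A ** B = mat 1" by simp
  have inj: "y = 0" if "A *v y = 0" for y
    using inj_matrix_vector_mult[OF inv] that by (metis injD matrix_vector_mult_0_right)
  have RC: "(\<forall>v. (\<Sum>j\<in>UNIV. A$r$j * v j) = 0) \<or> (\<exists>p. \<forall>v. (\<Sum>j\<in>UNIV. A$r$j * v j) = v p)
     \<or> (\<exists>p q. p \<noteq> q \<and> (\<forall>v. (\<Sum>j\<in>UNIV. A$r$j * v j) = v p + v q))" for r
    by (rule row_cases) (use entries01 rows in auto)
  define x where "x = (\<chi> i. B$i$c)"
  have Ax: "(\<Sum>j\<in>UNIV. A$r$j * x$j) = (if r = c then 1 else 0)" for r
  proof -
    have "(A ** B) $ r $ c = (\<Sum>j\<in>UNIV. A$r$j * x$j)"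
      by (simp add: matrix_matrix_mult_def x_def)
    then show ?thesis using AB by (simp add: mat_def)
  qed
  have xi: "B$i$c = x$i" by (simp add: x_def)
  show "matrix_inv A $ i $ c \<in> {0, 1, -1, 1/2, -1/2}"
  proof (cases "x$i = 0")
    case True then show ?thesis using xi by (simp add: B_def)
  next
    case False
    define t where "t = \<bar>x$i\<bar>"
    have tpos: "t > 0" using False by (simp add: t_def)
    define y where "y = (\<chi> j. if \<bar>x$j\<bar> = t then x$j else 0)"
    have other: "(\<Sum>j\<in>UNIV. A$r$j * y$j) = 0" if "r \<noteq> c" for r
    proof -
      have x0: "(\<Sum>j\<in>UNIV. A$r$j * x$j) = 0" using Ax[of r] that by simp
      from RC[of r] show ?thesis
      proof (elim disjE exE conjE)
        assume "\<forall>v. (\<Sum>j\<in>UNIV. A$r$j * v j) = 0"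
        then show ?thesis by blast
      next
        fix p assume h: "\<forall>v. (\<Sum>j\<in>UNIV. A$r$j * v j) = v p"
        then have "x$p = 0" using x0 h[rule_format, of "\<lambda>j. x$j"] by simp
        then show ?thesis using h[rule_format, of "\<lambda>j. y$j"] tpos by (simp add: y_def)
      next
        fix p q assume h: "\<forall>v. (\<Sum>j\<in>UNIV. A$r$j * v j) = v p + v q"
        then have "x$p + x$q = 0" using x0 h[rule_format, of "\<lambda>j. x$j"] by simp
        then have "y$p + y$q = 0" by (auto simp: y_def)
        then show ?thesis using h[rule_format, of "\<lambda>j. y$j"] by simp
      qed
    qed
    define l where "l = (\<Sum>j\<in>UNIV. A$c$j * y$j)"
    have "A *v (y - l *s x) = 0"
    unfolding vec_eq_iff
    proof
      fix r
      have "(A *v (y - l *s x)) $ r = (\<Sum>j\<in>UNIV. A$r$j * y$j) - l * (\<Sum>j\<in>UNIV. A$r$j * x$j)"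
        by (simp add: matrix_vector_mult_def algebra_simps sum_subtractf sum_distrib_left)
      also have "\<dots> = 0" using other[of r] Ax[of r] by (cases "r = c") (auto simp: l_def)
      finally show "(A *v (y - l *s x)) $ r = 0 $ r" by simp
    qed
    then have "y - l *s x = 0" using inj by blast
    then have yl: "y = l *s x" by simp
    have "y$i = x$i" by (simp add: y_def t_def)
    then have "x$i = l * x$i" using yl by (metis vector_smult_component)
    then have l1: "l = 1" using False by simp
    have vals: "x$j = 0 \<or> \<bar>x$j\<bar> = t" for j
    proof -
      have "y$j = x$j" using yl l1 by simp
      then show ?thesis by (auto simp: y_def split: if_splits)
    qed
    have xc: "(\<Sum>j\<in>UNIV. A$c$j * x$j) = 1" using Ax[of c] by simp
    have tv: "t = 1 \<or> t = 1/2"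
      using RC[of c]
    proof (elim disjE exE conjE)
      assume "\<forall>v. (\<Sum>j\<in>UNIV. A$c$j * v j) = 0"
      then show ?thesis using xc by auto
    next
      fix p assume h: "\<forall>v. (\<Sum>j\<in>UNIV. A$c$j * v j) = v p"
      then have "x$p = 1" using xc h[rule_format, of "\<lambda>j. x$j"] by simp
      then show ?thesis using vals[of p] by simp
    next
      fix p q assume h: "\<forall>v. (\<Sum>j\<in>UNIV. A$c$j * v j) = v p + v q"
      then have e: "x$p + x$q = 1" using xc h[rule_format, of "\<lambda>j. x$j"] by simp
      show ?thesis using vals[of p] vals[of q] e tpos by (auto simp: abs_if split: if_splits)
    qed
    have "x$i = t \<or> x$i = -t" by (auto simp: t_def abs_if)
    then show ?thesis using tv xi by (auto simp: B_def)
  qed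
qed

end
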